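(* Let $m\ge2$ be an integer, let $a,b\in\mathbb{Q}_m$ and $c=a+b$. Let $\{s_n(a)\}_{n\ge0}$, $\{s_n(b)\}_{n\ge0}$, $\{s_n(c)\}_{n\ge0}$ be sequences with values in $\{0,1,\dots,m-1\}$ such that $a=\sum_{n=0}^\infty\left(\frac{m}{m+1}\right)^n s_n(a)$, $b=\sum_{n=0}^\infty\left(\frac{m}{m+1}\right)^n s_n(b)$ and $c=\sum_{n=0}^\infty\left(\frac{m}{m+1}\right)^n s_n(c)$ in $\mathbb{Q}_m$. Define $\kappa_0=0$ and, for $n\ge0$, $$\kappa_{n+1}=\kappa_n+\left\lfloor\frac{s_n(a)+s_n(b)+\kappa_n}{m}\right\rfloor.$$ Then $s_n(c)\equiv s_n(a)+s_n(b)+\kappa_n\pmod m$ for every $n\ge0$.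
   Context: $D_m$ is the set of rationals $a/b$ (with $a,b$ coprime integers) such that $\gcd(b,m)=1$; it is a subring of $\mathbb{Q}$. For $a/b\in D_m$ in lowest terms, $|a/b|_m=m^{-k}$ where $k$ is the largest integer with $m^k\mid a$, and $|0|_m=0$; the metric is $d(u,v)=|u-v|_m$. $\mathbb{Q}_m$ is the Cauchy completion of $(D_m,d)$, with ring operations extended by continuity; $D_m$ is identified with its image in $\mathbb{Q}_m$. *)

theory Defs
  imports Complex_Main "HOL-Number_Theory.Cong"
begin

definition inD :: "int \<Rightarrow> rat \<Rightarrow> bool" where
  "inD m q = coprime (snd (quotient_of q)) m"

definition madic_abs :: "int \<Rightarrow> rat \<Rightarrow> real" where
  "madic_abs m q = (let a = fst (quotient_of q) in
     if a = 0 then 0 else (1 / real_of_int m) ^ (GREATEST k. m ^ k dvd a))"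

definition mcauchy :: "int \<Rightarrow> (nat \<Rightarrow> rat) \<Rightarrow> bool" where
  "mcauchy m X \<longleftrightarrow> (\<forall>n. inD m (X n)) \<and>
     (\<forall>e>0. \<exists>N. \<forall>i\<ge>N. \<forall>j\<ge>N. madic_abs m (X i - X j) < e)"

definition mequiv :: "int \<Rightarrow> (nat \<Rightarrow> rat) \<Rightarrow> (nat \<Rightarrow> rat) \<Rightarrow> bool" where
  "mequiv m X Y \<longleftrightarrow> (\<lambda>n. madic_abs m (X n - Y n)) \<longlonglongrightarrow> 0"

definition qm_class :: "int \<Rightarrow> (nat \<Rightarrow> rat) \<Rightarrow> (nat \<Rightarrow> rat) set" where
  "qm_class m X = {Y. mcauchy m Y \<and> mequiv m X Y}"

definition Qm :: "int \<Rightarrow> (nat \<Rightarrow> rat) set set" where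
  "Qm m = {qm_class m X | X. mcauchy m X}"

definition qm_rep :: "(nat \<Rightarrow> rat) set \<Rightarrow> (nat \<Rightarrow> rat)" where
  "qm_rep A = (SOME X. X \<in> A)"

definition qm_add :: "int \<Rightarrow> (nat \<Rightarrow> rat) set \<Rightarrow> (nat \<Rightarrow> rat) set \<Rightarrow> (nat \<Rightarrow> rat) set" where
  "qm_add m A B = qm_class m (\<lambda>n. qm_rep A n + qm_rep B n)"

definition qm_of :: "int \<Rightarrow> rat \<Rightarrow> (nat \<Rightarrow> rat) set" where
  "qm_of m q = qm_class m (\<lambda>_. q)"

definition qm_dist :: "int \<Rightarrow> (nat \<Rightarrow> rat) set \<Rightarrow> (nat \<Rightarrow> rat) set \<Rightarrow> real" where
  "qm_dist m A B = lim (\<lambda>n. madic_abs m (qm_rep A n - qm_rep B n))"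

definition qm_series_eq :: "int \<Rightarrow> (nat \<Rightarrow> int) \<Rightarrow> (nat \<Rightarrow> rat) set \<Rightarrow> bool" where
  "qm_series_eq m s A \<longleftrightarrow>
     (\<lambda>N. qm_dist m (qm_of m (\<Sum>n<N. (of_int m / (of_int m + 1)) ^ n * of_int (s n))) A)
       \<longlonglongrightarrow> 0"

primrec carry :: "int \<Rightarrow> (nat \<Rightarrow> int) \<Rightarrow> (nat \<Rightarrow> int) \<Rightarrow> nat \<Rightarrow> int" where
  "carry m sa sb 0 = 0"
| "carry m sa sb (Suc n) = carry m sa sb n +
     \<lfloor>(of_int (sa n + sb n + carry m sa sb n) :: rat) / of_int m\<rfloor>"

end

theory Submission
  imports Defs
begin


lemma inD_iff: "inD m x \<longleftrightarrow> (\<exists>p q. q > 0 \<and> coprime q m \<and> x = of_int p / of_int q)"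
proof
  assume h: "inD m x"
  obtain a b where ab: "quotient_of x = (a,b)" by (cases "quotient_of x")
  have "b > 0" "x = of_int a / of_int b" using ab quotient_of_denom_pos quotient_of_div by blast+
  moreover have "coprime b m" using h ab unfolding inD_def by simp
  ultimately show "\<exists>p q. q > 0 \<and> coprime q m \<and> x = of_int p / of_int q" by blast
next
  assume "\<exists>p q. q > 0 \<and> coprime q m \<and> x = of_int p / of_int q"
  then obtain p q where pq: "q > 0" "coprime q m" "x = of_int p / of_int q" by blast
  obtain a b where ab: "quotient_of x = (a,b)" by (cases "quotient_of x")
  have b: "b > 0" "coprime a b" "x = of_int a / of_int b"
    using ab quotient_of_denom_pos quotient_of_coprime quotient_of_div by blast+
  have "of_int a * of_int q = (of_int p * of_int b :: rat)" using pq b by (simp add: field_simps)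
  hence "a * q = p * b" by (metis of_int_eq_iff of_int_mult)
  hence "b dvd a * q" by simp
  hence "b dvd q" using b(2) by (metis coprime_commute coprime_dvd_mult_right_iff)
  hence "coprime b m" using pq(2) by (meson coprime_commute coprime_imp_coprime dvd_trans)
  thus "inD m x" unfolding inD_def using ab by simp
qed

lemma inD_of_int: "inD m (of_int n)"
  unfolding inD_iff by (rule exI[of _ n], rule exI[of _ 1]) simp

lemma inD_add: "inD m x \<Longrightarrow> inD m y \<Longrightarrow> inD m (x + y)"
proof -
  assume "inD m x" "inD m y"
  then obtain p1 q1 p2 q2 where h: "q1 > 0" "coprime q1 m" "x = of_int p1 / of_int q1"
     "q2 > 0" "coprime q2 m" "y = of_int p2 / of_int q2" unfolding inD_iff by blast
  have "x + y = of_int (p1*q2 + p2*q1) / of_int (q1*q2)" using h by (simp add: field_simps)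
  moreover have "q1 * q2 > 0" "coprime (q1*q2) m" using h by auto
  ultimately show ?thesis unfolding inD_iff by blast
qed

lemma inD_mult: "inD m x \<Longrightarrow> inD m y \<Longrightarrow> inD m (x * y)"
proof -
  assume "inD m x" "inD m y"
  then obtain p1 q1 p2 q2 where h: "q1 > 0" "coprime q1 m" "x = of_int p1 / of_int q1"
     "q2 > 0" "coprime q2 m" "y = of_int p2 / of_int q2" unfolding inD_iff by blast
  have "x * y = of_int (p1*p2) / of_int (q1*q2)" using h by (simp add: field_simps)
  moreover have "q1 * q2 > 0" "coprime (q1*q2) m" using h by auto
  ultimately show ?thesis unfolding inD_iff by blast
qed

lemma inD_uminus: "inD m x \<Longrightarrow> inD m (- x)"
  using inD_mult[OF inD_of_int[of m "-1"]] by simp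

lemma inD_diff: "inD m x \<Longrightarrow> inD m y \<Longrightarrow> inD m (x - y)"
  using inD_add[OF _ inD_uminus] by simp

lemma inD_inv: "m \<ge> 0 \<Longrightarrow> inD m (1 / (of_int m + 1))"
  unfolding inD_iff by (rule exI[of _ 1], rule exI[of _ "m+1"]) simp

lemma inD_power: "inD m x \<Longrightarrow> inD m (x ^ n)"
  by (induction n) (auto intro: inD_mult simp: inD_of_int[of m 1, simplified])

lemma inD_sum: fixes N :: nat shows "(\<And>n. n < N \<Longrightarrow> inD m (f n)) \<Longrightarrow> inD m (\<Sum>n<N. f n)"
  by (induction N) (auto intro: inD_add simp: inD_of_int[of m 0, simplified])

lemma inD_r: "m \<ge> 0 \<Longrightarrow> inD m ((of_int m / (of_int m + 1)) ^ n * of_int e)"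
proof -
  assume "m \<ge> 0"
  have "of_int m / (of_int m + 1) = of_int m * (1 / (of_int m + (1::rat)))" by simp
  then show ?thesis using inD_mult inD_power inD_of_int inD_inv[OF \<open>m \<ge> 0\<close>] by metis
qed

definition MD :: "int \<Rightarrow> nat \<Rightarrow> rat \<Rightarrow> bool" where
  "MD m j x \<longleftrightarrow> (\<exists>y. inD m y \<and> x = of_int m ^ j * y)"

lemma MD_inD: "MD m j x \<Longrightarrow> inD m x"
  unfolding MD_def using inD_mult inD_power inD_of_int by metis

lemma MD_0_iff: "MD m 0 x \<longleftrightarrow> inD m x"
  unfolding MD_def by simp

lemma MD_zero: "MD m j 0"
  unfolding MD_def using inD_of_int[of m 0] by (intro exI[of _ 0]) simp

lemma MD_add: "MD m j x \<Longrightarrow> MD m j y \<Longrightarrow> MD m j (x + y)"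
  unfolding MD_def by (metis distrib_left inD_add)

lemma MD_uminus: "MD m j x \<Longrightarrow> MD m j (- x)"
  unfolding MD_def by (metis inD_uminus mult_minus_right)

lemma MD_diff: "MD m j x \<Longrightarrow> MD m j y \<Longrightarrow> MD m j (x - y)"
  using MD_add[OF _ MD_uminus] by simp

lemma MD_mono: "j \<le> k \<Longrightarrow> MD m k x \<Longrightarrow> MD m j x"
proof -
  assume "j \<le> k" "MD m k x"
  then obtain y where y: "inD m y" "x = of_int m ^ k * y" unfolding MD_def by blast
  have "x = of_int m ^ j * (of_int m ^ (k - j) * y)"
    using y \<open>j \<le> k\<close> by (simp add: power_add[symmetric])
  moreover have "inD m (of_int m ^ (k - j) * y)" using y inD_mult inD_power inD_of_int by metis
  ultimately show ?thesis unfolding MD_def by blast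
qed

lemma MD_sum: fixes N :: nat shows "(\<And>n. n < N \<Longrightarrow> MD m j (f n)) \<Longrightarrow> MD m j (\<Sum>n<N. f n)"
  by (induction N) (auto intro: MD_add simp: MD_zero)

lemma MD_r: "m \<ge> 0 \<Longrightarrow> MD m n ((of_int m / (of_int m + 1)) ^ n * of_int e)"
proof -
  assume "m \<ge> 0"
  have "(of_int m / (of_int m + 1)) ^ n * of_int e = of_int m ^ n * ((1 / (of_int m + (1::rat))) ^ n * of_int e)"
    by (simp add: power_divide)
  moreover have "inD m ((1 / (of_int m + (1::rat))) ^ n * of_int e)"
    using inD_mult inD_power inD_of_int inD_inv[OF \<open>m \<ge> 0\<close>] by metis
  ultimately show ?thesis unfolding MD_def by blast
qed

lemma MD_dvd:
  assumes "quotient_of x = (a,b)" "inD m x"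
  shows "MD m j x \<longleftrightarrow> m ^ j dvd a"
proof
  assume "MD m j x"
  then obtain y where y: "inD m y" "x = of_int m ^ j * y" unfolding MD_def by blast
  then obtain p q where pq: "q > 0" "coprime q m" "y = of_int p / of_int q" unfolding inD_iff by blast
  have b: "b > 0" "x = of_int a / of_int b"
    using assms quotient_of_denom_pos quotient_of_div by blast+
  have "rat_of_int a / of_int b = (of_int m ^ j * of_int p) / of_int q" using b y pq by simp
  hence "of_int a * of_int q = (of_int m ^ j * of_int p) * (of_int b :: rat)"
    using b pq by (simp add: frac_eq_eq)
  hence "of_int a * of_int q = (of_int (m ^ j * p * b) :: rat)" by simp
  hence "a * q = m ^ j * p * b" by (metis of_int_eq_iff of_int_mult)
  hence "m ^ j dvd a * q" by (metis dvd_mult2 dvd_triv_left mult.assoc)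
  moreover have "coprime (m ^ j) q" using pq(2) by (simp add: coprime_commute)
  ultimately show "m ^ j dvd a" using coprime_dvd_mult_left_iff by blast
next
  assume "m ^ j dvd a"
  then obtain a' where a': "a = m ^ j * a'" by blast
  have b: "b > 0" "x = of_int a / of_int b"
    using assms quotient_of_denom_pos quotient_of_div by blast+
  have cb: "coprime b m" using assms unfolding inD_def by simp
  have "x = of_int m ^ j * (of_int a' / of_int b)" using b a' by simp
  moreover have "inD m (of_int a' / of_int b)" unfolding inD_iff using b cb by blast
  ultimately show "MD m j x" unfolding MD_def by blast
qed

lemma dvd_bound:
  fixes m a :: int
  assumes "m \<ge> 2" "a \<noteq> 0" "m ^ j dvd a"
  shows "j \<le> nat \<bar>a\<bar>"
proof -
  have "\<bar>m ^ j\<bar> \<le> \<bar>a\<bar>" using assms by (intro dvd_imp_le_int) auto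
  hence "m ^ j \<le> \<bar>a\<bar>" using assms(1) by simp
  moreover have "int j < 2 ^ j" using less_exp[of j] by (metis of_nat_less_iff of_nat_numeral of_nat_power)
  moreover have "(2::int) ^ j \<le> m ^ j" using assms(1) by (intro power_mono) auto
  ultimately show ?thesis by linarith
qed


lemma madic_abs_zero[simp]: "madic_abs m 0 = 0"
  unfolding madic_abs_def by simp

lemma abs_eq_G:
  assumes "inD m x" "x \<noteq> 0"
  shows "madic_abs m x = (1 / real_of_int m) ^ (GREATEST j. MD m j x)"
proof -
  obtain a b where ab: "quotient_of x = (a,b)" by (cases "quotient_of x")
  have "x = of_int a / of_int b" using ab quotient_of_div by blast
  hence a0: "a \<noteq> 0" using assms(2) by auto
  have "(GREATEST k. m ^ k dvd a) = (GREATEST j. MD m j x)"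
    using MD_dvd[OF ab assms(1)] by simp
  thus ?thesis unfolding madic_abs_def using ab a0 by simp
qed

lemma G_bound:
  assumes "m \<ge> 2" "inD m x" "x \<noteq> 0" "MD m j x"
  shows "j \<le> nat \<bar>fst (quotient_of x)\<bar>"
proof -
  obtain a b where ab: "quotient_of x = (a,b)" by (cases "quotient_of x")
  have "x = of_int a / of_int b" using ab quotient_of_div by blast
  hence a0: "a \<noteq> 0" using assms(3) by auto
  show ?thesis using dvd_bound[OF assms(1) a0] MD_dvd[OF ab assms(2)] assms(4) ab by simp
qed

lemma MD_G:
  assumes "m \<ge> 2" "inD m x" "x \<noteq> 0"
  shows "MD m (GREATEST j. MD m j x) x"
  using GreatestI_nat[of "\<lambda>j. MD m j x" 0] G_bound[OF assms] MD_0_iff assms(2) by blast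

lemma G_ge:
  assumes "m \<ge> 2" "x \<noteq> 0" "MD m k x"
  shows "k \<le> (GREATEST j. MD m j x)"
  using Greatest_le_nat[of "\<lambda>j. MD m j x" k] G_bound[OF assms(1) MD_inD[OF assms(3)] assms(2)] assms(3)
  by blast

lemma abs_nonneg: "m \<ge> 2 \<Longrightarrow> madic_abs m x \<ge> 0"
  unfolding madic_abs_def Let_def by auto

lemma abs_upper:
  assumes "m \<ge> 2" "MD m k x"
  shows "madic_abs m x \<le> (1 / real_of_int m) ^ k"
proof (cases "x = 0")
  case True thus ?thesis using assms(1) by simp
next
  case False
  have "k \<le> (GREATEST j. MD m j x)" using G_ge assms False by blast
  moreover have "0 \<le> 1 / real_of_int m" "1 / real_of_int m \<le> 1" using assms by auto
  ultimately have "(1 / real_of_int m) ^ (GREATEST j. MD m j x) \<le> (1 / real_of_int m) ^ k"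
    by (simp add: power_decreasing)
  thus ?thesis using abs_eq_G[OF MD_inD[OF assms(2)] False] by simp
qed

lemma abs_exact:
  assumes "m \<ge> 2" "MD m k x" "\<not> MD m (Suc k) x"
  shows "madic_abs m x = (1 / real_of_int m) ^ k"
proof -
  have x0: "x \<noteq> 0" using assms(3) MD_zero by blast
  have "(GREATEST j. MD m j x) = k"
  proof (rule Greatest_equality)
    show "MD m k x" by fact
    fix y assume "MD m y x"
    thus "y \<le> k" using MD_mono[of "Suc k" y m x] assms(3) by (cases "y \<le> k") auto
  qed
  thus ?thesis using abs_eq_G[OF MD_inD[OF assms(2)] x0] by simp
qed

lemma abs_uminus:
  assumes "inD m x" shows "madic_abs m (- x) = madic_abs m x"
proof (cases "x = 0")
  case True thus ?thesis by simp
next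
  case False
  have "MD m j (- x) \<longleftrightarrow> MD m j x" for j using MD_uminus[of m j x] MD_uminus[of m j "-x"] by auto
  thus ?thesis using abs_eq_G[OF assms False] abs_eq_G[OF inD_uminus[OF assms]] False by simp
qed

lemma abs_tri:
  assumes "m \<ge> 2" "inD m x" "inD m y"
  shows "madic_abs m (x + y) \<le> madic_abs m x + madic_abs m y"
proof -
  consider "x = 0" | "y = 0" | "x \<noteq> 0" "y \<noteq> 0" by blast
  thus ?thesis
  proof cases
    case 1 thus ?thesis using abs_nonneg[OF assms(1)] by simp
  next
    case 2 thus ?thesis using abs_nonneg[OF assms(1)] by simp
  next
    case 3
    define i where "i = (GREATEST j. MD m j x)"
    define k where "k = (GREATEST j. MD m j y)"
    have mi: "MD m i x" and mk: "MD m k y" using MD_G assms 3 i_def k_def by blast+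
    have ai: "madic_abs m x = (1 / real_of_int m) ^ i" using abs_eq_G assms 3 i_def by blast
    have ak: "madic_abs m y = (1 / real_of_int m) ^ k" using abs_eq_G assms 3 k_def by blast
    show ?thesis
    proof (cases "i \<le> k")
      case True
      have "MD m i (x + y)" using MD_add[OF mi MD_mono[OF True mk]] .
      hence "madic_abs m (x + y) \<le> madic_abs m x" using abs_upper assms(1) ai by simp
      thus ?thesis using abs_nonneg[OF assms(1), of y] by linarith
    next
      case False
      have "MD m k (x + y)" using MD_add[OF MD_mono[of k i] mk] False mi by simp
      hence "madic_abs m (x + y) \<le> madic_abs m y" using abs_upper assms(1) ak by simp
      thus ?thesis using abs_nonneg[OF assms(1), of x] by linarith
    qed
  qed
qed

lemma abs_tri_diff:
  assumes "m \<ge> 2" "inD m x" "inD m y" "inD m z"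
  shows "madic_abs m (x - z) \<le> madic_abs m (x - y) + madic_abs m (y - z)"
  using abs_tri[OF assms(1) inD_diff[OF assms(2,3)] inD_diff[OF assms(3,4)]] by simp

lemma abs_commute:
  assumes "inD m x" "inD m y"
  shows "madic_abs m (x - y) = madic_abs m (y - x)"
  using abs_uminus[OF inD_diff[OF assms]] by simp


lemma mcauchy_add:
  assumes "m \<ge> 2" "mcauchy m X" "mcauchy m Y"
  shows "mcauchy m (\<lambda>n. X n + Y n)"
  unfolding mcauchy_def
proof (intro conjI allI impI)
  have DX: "inD m (X n)" and DY: "inD m (Y n)" for n using assms unfolding mcauchy_def by auto
  show "inD m (X n + Y n)" for n using DX DY inD_add by blast
  fix e :: real assume "e > 0"
  then obtain N1 N2 where N1: "\<forall>i\<ge>N1. \<forall>j\<ge>N1. madic_abs m (X i - X j) < e/2"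
    and N2: "\<forall>i\<ge>N2. \<forall>j\<ge>N2. madic_abs m (Y i - Y j) < e/2"
  proof -
      have hX: "\<forall>e>0. \<exists>N. \<forall>i\<ge>N. \<forall>j\<ge>N. madic_abs m (X i - X j) < e" using assms(2) unfolding mcauchy_def by blast
      have hY: "\<forall>e>0. \<exists>N. \<forall>i\<ge>N. \<forall>j\<ge>N. madic_abs m (Y i - Y j) < e" using assms(3) unfolding mcauchy_def by blast
      have "e/2 > 0" using \<open>e > 0\<close> by simp
      then show ?thesis using hX hY that by metis
    qed
  show "\<exists>N. \<forall>i\<ge>N. \<forall>j\<ge>N. madic_abs m (X i + Y i - (X j + Y j)) < e"
  proof (intro exI[of _ "max N1 N2"] allI impI)
    fix i j assume "max N1 N2 \<le> i" "max N1 N2 \<le> j"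
    have "madic_abs m (X i + Y i - (X j + Y j)) = madic_abs m ((X i - X j) + (Y i - Y j))" by (simp add: algebra_simps)
    moreover have "madic_abs m ((X i - X j) + (Y i - Y j)) \<le> madic_abs m (X i - X j) + madic_abs m (Y i - Y j)"
      using abs_tri[OF assms(1) inD_diff[OF DX DX] inD_diff[OF DY DY]] by blast
    moreover have "madic_abs m (X i - X j) < e/2" using N1 \<open>max N1 N2 \<le> i\<close> \<open>max N1 N2 \<le> j\<close> by simp
    moreover have "madic_abs m (Y i - Y j) < e/2" using N2 \<open>max N1 N2 \<le> i\<close> \<open>max N1 N2 \<le> j\<close> by simp
    ultimately show "madic_abs m (X i + Y i - (X j + Y j)) < e" by linarith
  qed
qed

lemma mcauchy_const: "inD m q \<Longrightarrow> mcauchy m (\<lambda>_. q)"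
  unfolding mcauchy_def by simp

lemma abs_conv:
  assumes "m \<ge> 2" "mcauchy m X" "mcauchy m Y"
  shows "(\<lambda>n. madic_abs m (X n - Y n)) \<longlonglongrightarrow> lim (\<lambda>n. madic_abs m (X n - Y n))"
proof -
  have DX: "inD m (X n)" and DY: "inD m (Y n)" for n using assms unfolding mcauchy_def by auto
  have "Cauchy (\<lambda>n. madic_abs m (X n - Y n))"
  proof (rule metric_CauchyI)
    fix e :: real assume "e > 0"
    then obtain N1 N2 where N1: "\<forall>i\<ge>N1. \<forall>j\<ge>N1. madic_abs m (X i - X j) < e/2"
      and N2: "\<forall>i\<ge>N2. \<forall>j\<ge>N2. madic_abs m (Y i - Y j) < e/2"
    proof -
      have hX: "\<forall>e>0. \<exists>N. \<forall>i\<ge>N. \<forall>j\<ge>N. madic_abs m (X i - X j) < e" using assms(2) unfolding mcauchy_def by blast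
      have hY: "\<forall>e>0. \<exists>N. \<forall>i\<ge>N. \<forall>j\<ge>N. madic_abs m (Y i - Y j) < e" using assms(3) unfolding mcauchy_def by blast
      have "e/2 > 0" using \<open>e > 0\<close> by simp
      then show ?thesis using hX hY that by metis
    qed
    show "\<exists>M. \<forall>i\<ge>M. \<forall>j\<ge>M. dist (madic_abs m (X i - Y i)) (madic_abs m (X j - Y j)) < e"
    proof (intro exI[of _ "max N1 N2"] allI impI)
      fix i j assume ij: "max N1 N2 \<le> i" "max N1 N2 \<le> j"
      have w: "madic_abs m ((X i - Y i) - (X j - Y j)) \<le> madic_abs m (X i - X j) + madic_abs m (Y i - Y j)"
      proof -
        have "madic_abs m ((X i - X j) + - (Y i - Y j)) \<le> madic_abs m (X i - X j) + madic_abs m (- (Y i - Y j))"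
          using abs_tri[OF assms(1) inD_diff[OF DX DX] inD_uminus[OF inD_diff[OF DY DY]]] by blast
        moreover have "madic_abs m (- (Y i - Y j)) = madic_abs m (Y i - Y j)"
          using abs_uminus[OF inD_diff[OF DY DY]] by blast
        ultimately show ?thesis by (simp add: algebra_simps)
      qed
      have t1: "madic_abs m (X i - Y i) \<le> madic_abs m (X j - Y j) + madic_abs m ((X i - Y i) - (X j - Y j))"
        using abs_tri[OF assms(1), of "X j - Y j" "(X i - Y i) - (X j - Y j)"] inD_diff DX DY by simp
      have t2: "madic_abs m (X j - Y j) \<le> madic_abs m (X i - Y i) + madic_abs m ((X i - Y i) - (X j - Y j))"
        using abs_tri_diff[OF assms(1), of "X j - Y j" "X i - Y i" 0] abs_commute[of m "X j - Y j" "X i - Y i"]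
          inD_diff DX DY inD_of_int[of m 0] by simp
      have "madic_abs m (X i - X j) < e/2" using N1 ij by simp
      moreover have "madic_abs m (Y i - Y j) < e/2" using N2 ij by simp
      ultimately show "dist (madic_abs m (X i - Y i)) (madic_abs m (X j - Y j)) < e"
        using t1 t2 w unfolding dist_real_def by linarith
    qed
  qed
  thus ?thesis using Cauchy_convergent convergent_LIMSEQ_iff by blast
qed

lemma rep_in: "mcauchy m X \<Longrightarrow> qm_rep (qm_class m X) \<in> qm_class m X"
proof -
  assume "mcauchy m X"
  hence "X \<in> qm_class m X" unfolding qm_class_def mequiv_def by simp
  thus ?thesis unfolding qm_rep_def by (metis someI)
qed

lemma dist_lim:
  assumes "m \<ge> 2" "mcauchy m Z" "qm_rep T = Z" "inD m q"
  shows "(\<lambda>n. madic_abs m (q - Z n)) \<longlonglongrightarrow> qm_dist m (qm_of m q) T"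
proof -
  define R where "R = qm_rep (qm_of m q)"
  have "R \<in> qm_class m (\<lambda>_. q)" using rep_in[OF mcauchy_const[OF assms(4)]] R_def qm_of_def by simp
  hence R: "mcauchy m R" "(\<lambda>n. madic_abs m (q - R n)) \<longlonglongrightarrow> 0"
    unfolding qm_class_def mequiv_def by auto
  have DR: "inD m (R n)" and DZ: "inD m (Z n)" for n using R assms unfolding mcauchy_def by auto
  define L where "L = qm_dist m (qm_of m q) T"
  have L: "(\<lambda>n. madic_abs m (R n - Z n)) \<longlonglongrightarrow> L"
    using abs_conv[OF assms(1) R(1) assms(2)] unfolding L_def qm_dist_def R_def assms(3) by simp
  have lo: "madic_abs m (R n - Z n) - madic_abs m (q - R n) \<le> madic_abs m (q - Z n)" for n
    using abs_tri_diff[OF assms(1) DR[of n] assms(4) DZ[of n]] abs_commute[OF assms(4) DR[of n]] by linarith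
  have up: "madic_abs m (q - Z n) \<le> madic_abs m (R n - Z n) + madic_abs m (q - R n)" for n
    using abs_tri_diff[OF assms(1) assms(4) DR[of n] DZ[of n]] by linarith
  have "(\<lambda>n. madic_abs m (R n - Z n) - madic_abs m (q - R n)) \<longlonglongrightarrow> L - 0"
    by (intro tendsto_diff L R(2))
  moreover have "(\<lambda>n. madic_abs m (R n - Z n) + madic_abs m (q - R n)) \<longlonglongrightarrow> L + 0"
    by (intro tendsto_add L R(2))
  ultimately show ?thesis unfolding L_def[symmetric]
    using tendsto_sandwich[of "\<lambda>n. madic_abs m (R n - Z n) - madic_abs m (q - R n)" "\<lambda>n. madic_abs m (q - Z n)" sequentially
      "\<lambda>n. madic_abs m (R n - Z n) + madic_abs m (q - R n)" L] lo up by simp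
qed


lemma dvd_of_inD:
  assumes "inD m u" "of_int e = of_int m * u"
  shows "m dvd e"
proof -
  obtain p q where pq: "q > 0" "coprime q m" "u = of_int p / of_int q" using assms(1) unfolding inD_iff by blast
  have "rat_of_int e * of_int q = of_int m * of_int p" using assms(2) pq by simp
  hence "e * q = m * p" by (metis of_int_eq_iff of_int_mult)
  hence "m dvd e * q" by (metis dvd_triv_left)
  thus ?thesis using pq(2) by (metis coprime_commute coprime_dvd_mult_left_iff)
qed

lemma unique_digits:
  fixes e :: "nat \<Rightarrow> int"
  assumes m2: "m \<ge> 2" and eb: "\<And>n. \<bar>e n\<bar> < m"
    and lim0: "(\<lambda>N. madic_abs m (\<Sum>n<N. (of_int m / (of_int m + 1)) ^ n * of_int (e n))) \<longlonglongrightarrow> 0"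
  shows "e k = 0"
proof (induction k rule: less_induct)
  case (less k)
  show ?case
  proof (rule ccontr)
    assume ek: "e k \<noteq> 0"
    have m0: "m \<ge> 0" using m2 by simp
    define r :: rat where "r = of_int m / (of_int m + 1)"
    define e' where "e' = e(k := 0)"
    have tail: "MD m (Suc k) (\<Sum>n<N. r ^ n * of_int (e' n))" for N
    proof (rule MD_sum)
      fix n assume "n < N"
      show "MD m (Suc k) (r ^ n * of_int (e' n))"
      proof (cases "n \<le> k")
        case True
        hence "e' n = 0" using less.IH unfolding e'_def by (cases "n = k") auto
        thus ?thesis using MD_zero by simp
      next
        case False
        thus ?thesis using MD_mono[of "Suc k" n] MD_r[OF m0] r_def by simp
      qed
    qed
    have lead: "MD m k (r ^ k * of_int (e k))" using MD_r[OF m0] r_def by simp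
    have lead_not: "\<not> MD m (Suc k) (r ^ k * of_int (e k))"
    proof
      assume "MD m (Suc k) (r ^ k * of_int (e k))"
      then obtain y where y: "inD m y" "r ^ k * of_int (e k) = of_int m ^ Suc k * y" unfolding MD_def by blast
      have m1: "of_int m + (1::rat) \<noteq> 0" "of_int m \<noteq> (0::rat)" using m2 by auto
      have "of_int m ^ k * of_int (e k) = of_int m ^ k * (of_int m * ((of_int m + 1) ^ k * y))"
        using y(2) m1 unfolding r_def by (simp add: power_divide field_simps)
      hence "rat_of_int (e k) = of_int m * ((of_int m + 1) ^ k * y)" using m1 by simp
      moreover have "inD m ((of_int m + 1) ^ k * y)"
        using inD_mult inD_power inD_of_int[of m "m+1"] y(1) by (metis of_int_add of_int_1)
      ultimately have "m dvd e k" using dvd_of_inD by blast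
      hence "\<bar>m\<bar> \<le> \<bar>e k\<bar>" using ek dvd_imp_le_int by blast
      thus False using eb[of k] m2 by simp
    qed
    have eq: "madic_abs m (\<Sum>n<N. r ^ n * of_int (e n)) = (1 / real_of_int m) ^ k" if "N > k" for N
    proof -
      have "(\<Sum>n<N. r ^ n * of_int (e n)) = (\<Sum>n<N. r ^ n * of_int (e' n) + (if n = k then r ^ k * of_int (e k) else 0))"
        by (rule sum.cong) (auto simp: e'_def)
      also have "\<dots> = (\<Sum>n<N. r ^ n * of_int (e' n)) + r ^ k * of_int (e k)"
        using that by (simp add: sum.distrib)
      finally have s: "(\<Sum>n<N. r ^ n * of_int (e n)) = (\<Sum>n<N. r ^ n * of_int (e' n)) + r ^ k * of_int (e k)" .
      have "MD m k (\<Sum>n<N. r ^ n * of_int (e n))"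
        unfolding s using MD_add[OF MD_mono[OF _ tail] lead] by simp
      moreover have "\<not> MD m (Suc k) (\<Sum>n<N. r ^ n * of_int (e n))"
      proof
        assume "MD m (Suc k) (\<Sum>n<N. r ^ n * of_int (e n))"
        hence "MD m (Suc k) ((\<Sum>n<N. r ^ n * of_int (e n)) - (\<Sum>n<N. r ^ n * of_int (e' n)))"
          using MD_diff tail by blast
        thus False using lead_not unfolding s by simp
      qed
      ultimately show ?thesis using abs_exact[OF m2] by blast
    qed
    have "(\<lambda>N. madic_abs m (\<Sum>n<N. r ^ n * of_int (e n))) \<longlonglongrightarrow> (1 / real_of_int m) ^ k"
    proof (rule Lim_transform_eventually[OF tendsto_const])
      show "\<forall>\<^sub>F N in sequentially. (1 / real_of_int m) ^ k = madic_abs m (\<Sum>n<N. r ^ n * of_int (e n))"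
        using eq by (intro eventually_sequentiallyI[of "Suc k"]) simp
    qed
    hence "(1 / real_of_int m) ^ k = 0" using lim0 LIMSEQ_unique unfolding r_def by blast
    thus False using m2 by simp
  qed
qed


lemma carry_sum:
  fixes m :: int and sa sb :: "nat \<Rightarrow> int" and N :: nat
  assumes "m \<ge> 2"
  shows "(\<Sum>n<N. (of_int m / (of_int m + 1)) ^ n * of_int (sa n)) + (\<Sum>n<N. (of_int m / (of_int m + 1)) ^ n * of_int (sb n))
    = (\<Sum>n<N. (of_int m / (of_int m + 1)) ^ n * of_int ((sa n + sb n + carry m sa sb n) mod m))
      + (of_int m / (of_int m + 1)) ^ N * (of_int ((m + 1) * carry m sa sb N) :: rat)"
proof (induction N)
  case 0 show ?case by simp
next
  case (Suc N)
  define r :: rat where "r = of_int m / (of_int m + 1)"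
  define k where "k = carry m sa sb N"
  define s where "s = sa N + sb N"
  have m1: "of_int m + (1::rat) \<noteq> 0" using assms by simp
  have ck0: "carry m sa sb (Suc N) = k + \<lfloor>(of_int (s + k) :: rat) / of_int m\<rfloor>"
    unfolding k_def s_def by (simp only: carry.simps)
  have ck: "carry m sa sb (Suc N) = k + (s + k) div m"
    unfolding ck0 floor_divide_of_int_eq ..
  have ide: "s + (m + 1) * k = (s + k) mod m + m * (k + (s + k) div m)"
    using div_mult_mod_eq[of "s + k" m] by (simp add: algebra_simps)
  have rr: "r ^ Suc N * (of_int m + 1) = r ^ N * of_int m" unfolding r_def using m1 by simp
  have "r ^ N * of_int s + r ^ N * of_int ((m + 1) * k)
      = r ^ N * of_int ((s + k) mod m) + r ^ Suc N * of_int ((m + 1) * (k + (s + k) div m))"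
  proof -
    have "r ^ N * of_int s + r ^ N * of_int ((m + 1) * k) = r ^ N * of_int (s + (m + 1) * k)" by (simp add: algebra_simps)
    also have "\<dots> = r ^ N * of_int ((s + k) mod m) + (r ^ N * of_int m) * of_int (k + (s + k) div m)"
    proof -
      have ide': "(of_int (s + (m+1)*k)::rat) = of_int ((s + k) mod m) + of_int m * of_int (k + (s + k) div m)"
        by (simp only: ide of_int_add of_int_mult)
      show ?thesis unfolding ide' by (simp only: distrib_left mult.assoc)
    qed
    also have "\<dots> = r ^ N * of_int ((s + k) mod m) + r ^ Suc N * of_int ((m + 1) * (k + (s + k) div m))"
      unfolding rr[symmetric] by (simp add: algebra_simps)
    finally show ?thesis .
  qed
  hence main: "r ^ N * of_int s + r ^ N * of_int ((m + 1) * k)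
      = r ^ N * of_int ((s + k) mod m) + r ^ Suc N * of_int ((m + 1) * carry m sa sb (Suc N))"
    unfolding ck .
  have IH: "(\<Sum>n<N. r ^ n * of_int (sa n)) + (\<Sum>n<N. r ^ n * of_int (sb n))
    = (\<Sum>n<N. r ^ n * of_int ((sa n + sb n + carry m sa sb n) mod m)) + r ^ N * of_int ((m + 1) * k)"
    using Suc.IH unfolding r_def k_def .
  have "(\<Sum>n<Suc N. r ^ n * of_int (sa n)) + (\<Sum>n<Suc N. r ^ n * of_int (sb n))
    = (\<Sum>n<N. r ^ n * of_int (sa n)) + (\<Sum>n<N. r ^ n * of_int (sb n)) + (r ^ N * of_int s)"
    unfolding s_def by (simp del: carry.simps add: algebra_simps)
  also have "\<dots> = (\<Sum>n<N. r ^ n * of_int ((sa n + sb n + carry m sa sb n) mod m)) + (r ^ N * of_int s + r ^ N * of_int ((m + 1) * k))"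
    unfolding IH by (simp del: carry.simps add: algebra_simps)
  also have "\<dots> = (\<Sum>n<Suc N. r ^ n * of_int ((sa n + sb n + carry m sa sb n) mod m)) + r ^ Suc N * of_int ((m + 1) * carry m sa sb (Suc N))"
    unfolding main by (simp del: carry.simps add: algebra_simps s_def k_def)
  finally show ?case unfolding r_def .
qed


theorem mainTheorem12:
  fixes m :: int and a b c :: "(nat \<Rightarrow> rat) set" and sa sb sc :: "nat \<Rightarrow> int"
  assumes "m \<ge> 2"
    and "a \<in> Qm m" and "b \<in> Qm m" and "c = qm_add m a b"
    and "\<And>n. 0 \<le> sa n \<and> sa n \<le> m - 1"
    and "\<And>n. 0 \<le> sb n \<and> sb n \<le> m - 1"
    and "\<And>n. 0 \<le> sc n \<and> sc n \<le> m - 1"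
    and "qm_series_eq m sa a" and "qm_series_eq m sb b" and "qm_series_eq m sc c"
  shows "\<forall>n. [sc n = sa n + sb n + carry m sa sb n] (mod m)"
proof -
  note m2 = assms(1)
  have m0: "m \<ge> 0" using m2 by simp
  define r :: rat where "r = of_int m / (of_int m + 1)"
  define P where "P s N = (\<Sum>n<N. r ^ n * of_int (s n))" for s :: "nat \<Rightarrow> int" and N
  have PD: "inD m (P s N)" for s N unfolding P_def r_def by (rule inD_sum, rule inD_r[OF m0])
  obtain X0 where X0: "mcauchy m X0" "a = qm_class m X0" using assms(2) unfolding Qm_def by blast
  obtain Y0 where Y0: "mcauchy m Y0" "b = qm_class m Y0" using assms(3) unfolding Qm_def by blast
  define A where "A = qm_rep a"
  define B where "B = qm_rep b"
  have A: "mcauchy m A" using rep_in[OF X0(1)] X0(2) A_def unfolding qm_class_def by auto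
  have B: "mcauchy m B" using rep_in[OF Y0(1)] Y0(2) B_def unfolding qm_class_def by auto
  define S where "S = (\<lambda>n. A n + B n)"
  have cS: "c = qm_class m S" using assms(4) unfolding qm_add_def S_def A_def B_def by simp
  have S: "mcauchy m S" unfolding S_def by (rule mcauchy_add[OF m2 A B])
  define C where "C = qm_rep c"
  have C: "mcauchy m C" "(\<lambda>n. madic_abs m (S n - C n)) \<longlonglongrightarrow> 0"
    using rep_in[OF S] cS C_def unfolding qm_class_def mequiv_def by auto
  have DA: "inD m (A n)" and DB: "inD m (B n)" and DC: "inD m (C n)" and DS: "inD m (S n)" for n
    using A B C S unfolding mcauchy_def by auto
  define da where "da N = qm_dist m (qm_of m (P sa N)) a" for N
  define db where "db N = qm_dist m (qm_of m (P sb N)) b" for N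
  define dc where "dc N = qm_dist m (qm_of m (P sc N)) c" for N
  have da0: "da \<longlonglongrightarrow> 0" using assms(8) unfolding qm_series_eq_def da_def P_def r_def .
  have db0: "db \<longlonglongrightarrow> 0" using assms(9) unfolding qm_series_eq_def db_def P_def r_def .
  have dc0: "dc \<longlonglongrightarrow> 0" using assms(10) unfolding qm_series_eq_def dc_def P_def r_def .
  have la: "(\<lambda>n. madic_abs m (P sa N - A n)) \<longlonglongrightarrow> da N" for N
    unfolding da_def by (rule dist_lim[OF m2 A A_def[symmetric] PD])
  have lb: "(\<lambda>n. madic_abs m (P sb N - B n)) \<longlonglongrightarrow> db N" for N
    unfolding db_def by (rule dist_lim[OF m2 B B_def[symmetric] PD])
  have lc: "(\<lambda>n. madic_abs m (P sc N - C n)) \<longlonglongrightarrow> dc N" for N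
    unfolding dc_def by (rule dist_lim[OF m2 C(1) C_def[symmetric] PD])
  define E where "E N = madic_abs m (P sc N - (P sa N + P sb N))" for N
  have Ele: "E N \<le> dc N + 0 + da N + db N" for N
  proof (rule LIMSEQ_le_const)
    show "(\<lambda>n. madic_abs m (P sc N - C n) + madic_abs m (S n - C n) + madic_abs m (P sa N - A n) + madic_abs m (P sb N - B n))
       \<longlonglongrightarrow> dc N + 0 + da N + db N"
      by (intro tendsto_add lc C(2) la lb)
    show "\<exists>N'. \<forall>n\<ge>N'. E N \<le> madic_abs m (P sc N - C n) + madic_abs m (S n - C n) + madic_abs m (P sa N - A n) + madic_abs m (P sb N - B n)"
    proof (intro exI allI impI)
      fix n
      have DPab: "inD m (P sa N + P sb N)" using PD inD_add by blast
      have 1: "E N \<le> madic_abs m (P sc N - C n) + madic_abs m (C n - (P sa N + P sb N))"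
        unfolding E_def by (rule abs_tri_diff[OF m2 PD DC DPab])
      have 2: "madic_abs m (C n - (P sa N + P sb N)) \<le> madic_abs m (C n - S n) + madic_abs m (S n - (P sa N + P sb N))"
        by (rule abs_tri_diff[OF m2 DC DS DPab])
      have 3: "madic_abs m (C n - S n) = madic_abs m (S n - C n)" by (rule abs_commute[OF DC DS])
      have "madic_abs m (S n - (P sa N + P sb N)) = madic_abs m ((A n - P sa N) + (B n - P sb N))"
        unfolding S_def by (simp add: algebra_simps)
      also have "\<dots> \<le> madic_abs m (A n - P sa N) + madic_abs m (B n - P sb N)"
        by (rule abs_tri[OF m2 inD_diff[OF DA PD] inD_diff[OF DB PD]])
      also have "\<dots> = madic_abs m (P sa N - A n) + madic_abs m (P sb N - B n)"
        using abs_commute[OF DA PD] abs_commute[OF DB PD] by simp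
      finally have 4: "madic_abs m (S n - (P sa N + P sb N)) \<le> madic_abs m (P sa N - A n) + madic_abs m (P sb N - B n)" .
      show "E N \<le> madic_abs m (P sc N - C n) + madic_abs m (S n - C n) + madic_abs m (P sa N - A n) + madic_abs m (P sb N - B n)"
        using 1 2 3 4 by linarith
    qed
  qed
  have E0: "E \<longlonglongrightarrow> 0"
  proof (rule tendsto_sandwich[of "\<lambda>_. 0" E sequentially "\<lambda>N. dc N + 0 + da N + db N"])
    show "\<forall>\<^sub>F N in sequentially. 0 \<le> E N" unfolding E_def using abs_nonneg[OF m2] by simp
    show "\<forall>\<^sub>F N in sequentially. E N \<le> dc N + 0 + da N + db N" using Ele by simp
    show "(\<lambda>_. 0) \<longlonglongrightarrow> (0::real)" by simp
    have "(\<lambda>N. dc N + 0 + da N + db N) \<longlonglongrightarrow> 0 + 0 + 0 + 0" by (intro tendsto_add dc0 da0 db0 tendsto_const)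
    thus "(\<lambda>N. dc N + 0 + da N + db N) \<longlonglongrightarrow> 0" by simp
  qed
  define d where "d n = (sa n + sb n + carry m sa sb n) mod m" for n
  have cs: "P sa N + P sb N = P d N + r ^ N * of_int ((m + 1) * carry m sa sb N)" for N
    using carry_sum[OF m2, of sa N sb] unfolding P_def r_def d_def .
  define e where "e n = sc n - d n" for n
  have Pe: "(\<Sum>n<N. r ^ n * of_int (e n)) = P sc N - P d N" for N
    unfolding P_def e_def by (simp add: sum_subtractf algebra_simps)
  have lim0: "(\<lambda>N. madic_abs m (\<Sum>n<N. r ^ n * of_int (e n))) \<longlonglongrightarrow> 0"
  proof (rule tendsto_sandwich[of "\<lambda>_. 0" _ sequentially "\<lambda>N. E N + (1 / real_of_int m) ^ N"])
    show "\<forall>\<^sub>F N in sequentially. 0 \<le> madic_abs m (\<Sum>n<N. r ^ n * of_int (e n))" using abs_nonneg[OF m2] by simp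
    show "(\<lambda>_. 0) \<longlonglongrightarrow> (0::real)" by simp
    have "(\<lambda>N. (1 / real_of_int m) ^ N) \<longlonglongrightarrow> 0" using m2 by (intro LIMSEQ_power_zero) simp
    hence "(\<lambda>N. E N + (1 / real_of_int m) ^ N) \<longlonglongrightarrow> 0 + 0" by (intro tendsto_add E0)
    thus "(\<lambda>N. E N + (1 / real_of_int m) ^ N) \<longlonglongrightarrow> 0" by simp
    show "\<forall>\<^sub>F N in sequentially. madic_abs m (\<Sum>n<N. r ^ n * of_int (e n)) \<le> E N + (1 / real_of_int m) ^ N"
    proof (intro always_eventually allI)
      fix N
      have MDc: "MD m N (r ^ N * of_int ((m + 1) * carry m sa sb N))" unfolding r_def by (rule MD_r[OF m0])
      have "(\<Sum>n<N. r ^ n * of_int (e n)) = (P sc N - (P sa N + P sb N)) + r ^ N * of_int ((m + 1) * carry m sa sb N)"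
        unfolding Pe cs by simp
      hence "madic_abs m (\<Sum>n<N. r ^ n * of_int (e n)) \<le> E N + madic_abs m (r ^ N * of_int ((m + 1) * carry m sa sb N))"
        unfolding E_def using abs_tri[OF m2 inD_diff[OF PD inD_add[OF PD PD]] MD_inD[OF MDc]] by simp
      thus "madic_abs m (\<Sum>n<N. r ^ n * of_int (e n)) \<le> E N + (1 / real_of_int m) ^ N"
        using abs_upper[OF m2 MDc] by linarith
    qed
  qed
  have eb: "\<bar>e n\<bar> < m" for n
  proof -
    have "0 \<le> d n" "d n < m" unfolding d_def using m2 by auto
    thus ?thesis unfolding e_def using assms(7)[of n] by linarith
  qed
  have lim0': "(\<lambda>N. madic_abs m (\<Sum>n<N. (of_int m / (of_int m + 1)) ^ n * of_int (e n))) \<longlonglongrightarrow> 0"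
    using lim0 unfolding r_def .
  have "e n = 0" for n using unique_digits[OF m2 eb lim0'] by blast
  hence "sc n = d n" for n unfolding e_def by simp
  thus ?thesis unfolding d_def cong_def by simp
qed

end
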